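(* Let $X,Y$ be finite sets and consider $\ell^\infty(X)\subseteq B(\ell^2(X))$, $\ell^\infty(Y)\subseteq B(\ell^2(Y))$ acting diagonally. For a multi-relation $R\subseteq X\times X\times Y$ put $V_R=\mathrm{span}\{e_{x_1x_2}\otimes e_{yy}:(x_1,x_2,y)\in R\}\subseteq B(\ell^2(X))\otimes\ell^\infty(Y)$, and for a quantum multi-relation $V$ on $(\ell^\infty(X),\ell^\infty(Y))$ put $R_V=\{(x_1,x_2,y):\exists\,T\in V\text{ with }\langle e_{x_1}\otimes e_y,T(e_{x_2}\otimes e_y)\rangle\ne0\}$. Then $V_R$ is a quantum multi-relation, $R_V$ is a multi-relation, and the assignments $R\mapsto V_R$ and $V\mapsto R_V$ are mutually inverse bijections between multi-relations on $(X,Y)$ and quantum multi-relations on $(\ell^\infty(X),\ell^\infty(Y))$.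
   Context: $\{e_x\}$ is the standard basis of $\ell^2(X)$ and $e_{x_1x_2}$ the matrix units. A multi-relation on a pair of finite sets $(X,Y)$ is a subset $R\subseteq X\times X\times Y$. For finite-dimensional von Neumann algebras $M\subseteq B(H)$, $N\subseteq B(K)$, a quantum multi-relation (multigraph) on $(M,N)$ is a linear subspace $V\subseteq B(H\otimes K)$ such that (1) $V\subseteq B(H)\otimes N$; (2) $V$ is an $(M'\otimes1)$–$(M'\otimes1)$ bimodule, where $M'$ is the commutant of $M$ in $B(H)$; (3) $(1\otimes Z(N))V\subseteq V$, where $Z(N)=N\cap N'$ is the center of $N$. *)

theory Defs
  imports Main "HOL-Library.Complex_Order" Complex_Main
begin

text \<open>Operators on the finite-dimensional Hilbert space l2('a) are represented by their
matrices w.r.t. the standard basis: A i j = <e_i, A e_j>.  Operators on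
l2(X) (x) l2(Y) = l2(X x Y) are matrices indexed by X x Y.\<close>

type_synonym 'a mat = "'a \<Rightarrow> 'a \<Rightarrow> complex"

definition mmul :: "('a::finite) mat \<Rightarrow> 'a mat \<Rightarrow> 'a mat" where
  "mmul A B = (\<lambda>i j. \<Sum>k\<in>UNIV. A i k * B k j)"

definition idm :: "'a mat" where
  "idm = (\<lambda>i j. if i = j then 1 else 0)"

definition munit :: "'a \<Rightarrow> 'a \<Rightarrow> 'a mat" where
  "munit a b = (\<lambda>i j. if i = a \<and> j = b then 1 else 0)"

definition tens :: "'x mat \<Rightarrow> 'y mat \<Rightarrow> ('x \<times> 'y) mat" where
  "tens A B = (\<lambda>(x1, y1) (x2, y2). A x1 x2 * B y1 y2)"

definition mspan :: "'a mat set \<Rightarrow> 'a mat set" where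
  "mspan S = {T. \<exists>(n::nat) (c::nat \<Rightarrow> complex) f.
      (\<forall>k<n. f k \<in> S) \<and> T = (\<lambda>i j. \<Sum>k<n. c k * f k i j)}"

definition msubspace :: "'a mat set \<Rightarrow> bool" where
  "msubspace V \<longleftrightarrow> (\<lambda>i j. 0) \<in> V \<and>
     (\<forall>S\<in>V. \<forall>T\<in>V. (\<lambda>i j. S i j + T i j) \<in> V) \<and>
     (\<forall>c::complex. \<forall>T\<in>V. (\<lambda>i j. c * T i j) \<in> V)"

definition commutant :: "('a::finite) mat set \<Rightarrow> 'a mat set" where
  "commutant M = {A. \<forall>B\<in>M. mmul A B = mmul B A}"

definition center :: "('a::finite) mat set \<Rightarrow> 'a mat set" where
  "center N = N \<inter> commutant N"

definition tensor_sp :: "'x mat set \<Rightarrow> 'y mat set \<Rightarrow> ('x \<times> 'y) mat set" where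
  "tensor_sp S N = mspan {tens A B | A B. A \<in> S \<and> B \<in> N}"

definition quantum_multi_relation ::
  "('x::finite) mat set \<Rightarrow> ('y::finite) mat set \<Rightarrow> ('x \<times> 'y) mat set \<Rightarrow> bool" where
  "quantum_multi_relation M N V \<longleftrightarrow>
     msubspace V \<and>
     V \<subseteq> tensor_sp UNIV N \<and>
     (\<forall>A\<in>commutant M. \<forall>B\<in>commutant M. \<forall>T\<in>V.
        mmul (tens A idm) (mmul T (tens B idm)) \<in> V) \<and>
     (\<forall>Z\<in>center N. \<forall>T\<in>V. mmul (tens idm Z) T \<in> V)"

definition linfty :: "('a::finite) mat set" where
  "linfty = {A. \<forall>i j. i \<noteq> j \<longrightarrow> A i j = 0}"

definition V_of_R :: "('x::finite \<times> 'x \<times> 'y::finite) set \<Rightarrow> ('x \<times> 'y) mat set" where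
  "V_of_R R = mspan {tens (munit x1 x2) (munit y y) | x1 x2 y. (x1, x2, y) \<in> R}"

definition R_of_V :: "('x::finite \<times> 'y::finite) mat set \<Rightarrow> ('x \<times> 'x \<times> 'y) set" where
  "R_of_V V = {(x1, x2, y). \<exists>T\<in>V. T (x1, y) (x2, y) \<noteq> 0}"

end

theory Submission
  imports Defs
begin


lemma mspan_induct:
  assumes "T \<in> mspan S" "P (\<lambda>i j. 0)"
    "\<And>A B. P A \<Longrightarrow> P B \<Longrightarrow> P (\<lambda>i j. A i j + B i j)"
    "\<And>c A. P A \<Longrightarrow> P (\<lambda>i j. c * A i j)"
    "\<And>A. A \<in> S \<Longrightarrow> P A"
  shows "P T"
proof -
  obtain n :: nat and c :: "nat \<Rightarrow> complex" and f where f: "\<forall>k<n. f k \<in> S" and T: "T = (\<lambda>i j. \<Sum>k<n. c k * f k i j)"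
    using assms(1) unfolding mspan_def by blast
  have "P (\<lambda>i j. \<Sum>k<m. c k * f k i j)" if "m \<le> n" for m
    using that
  proof (induction m)
    case 0 then show ?case using assms(2) by simp
  next
    case (Suc m)
    have "P (\<lambda>i j. (\<Sum>k<m. c k * f k i j) + c m * f m i j)"
      using Suc assms(3)[of "\<lambda>i j. \<Sum>k<m. c k * f k i j" "\<lambda>i j. c m * f m i j"]
        assms(4) assms(5) f by simp
    then show ?case by simp
  qed
  then show ?thesis using T by simp
qed

lemma mspan_sub: "A \<in> S \<Longrightarrow> A \<in> mspan S"
  unfolding mspan_def
  by (rule CollectI, rule exI[of _ 1], rule exI[of _ "\<lambda>_. 1"], rule exI[of _ "\<lambda>_. A"]) simp

lemma mspan_add1:
  assumes "A \<in> mspan S" "G \<in> S"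
  shows "(\<lambda>i j. A i j + c0 * G i j) \<in> mspan S"
proof -
  obtain n :: nat and c :: "nat \<Rightarrow> complex" and f where f: "\<forall>k<n. f k \<in> S" and T: "A = (\<lambda>i j. \<Sum>k<n. c k * f k i j)"
    using assms(1) unfolding mspan_def by blast
  have e: "(\<lambda>i j. A i j + c0 * G i j) = (\<lambda>i j. \<Sum>k<Suc n. (c(n:=c0)) k * (f(n:=G)) k i j)"
    using T by (auto intro!: sum.cong)
  show ?thesis unfolding mspan_def e using f assms(2)
    by (intro CollectI exI[of _ "Suc n"] exI[of _ "c(n:=c0)"] exI[of _ "f(n:=G)"]) auto
qed

lemma mspan_addsum:
  fixes m :: nat
  assumes "A \<in> mspan S" "\<forall>k<m. g k \<in> S"
  shows "(\<lambda>i j. A i j + (\<Sum>k<m. d k * g k i j)) \<in> mspan S"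
  using assms(2)
proof (induction m)
  case 0 then show ?case using assms(1) by simp
next
  case (Suc m)
  have "(\<lambda>i j. (A i j + (\<Sum>k<m. d k * g k i j)) + d m * g m i j) \<in> mspan S"
    using mspan_add1[OF Suc.IH] Suc.prems by simp
  then show ?case by (simp add: add.assoc)
qed

lemma mspan_subspace: "msubspace (mspan S)"
  unfolding msubspace_def
proof (intro conjI ballI allI)
  show "(\<lambda>i j. 0) \<in> mspan S" unfolding mspan_def
    by (intro CollectI exI[of _ 0]) auto
next
  fix A B assume A: "A \<in> mspan S" and B: "B \<in> mspan S"
  obtain n :: nat and c :: "nat \<Rightarrow> complex" and f where f: "\<forall>k<n. f k \<in> S" and T: "B = (\<lambda>i j. \<Sum>k<n. c k * f k i j)"
    using B unfolding mspan_def by blast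
  show "(\<lambda>i j. A i j + B i j) \<in> mspan S" using mspan_addsum[OF A f] T by simp
next
  fix c0 :: complex and A assume A: "A \<in> mspan S"
  obtain n :: nat and c :: "nat \<Rightarrow> complex" and f where f: "\<forall>k<n. f k \<in> S" and T: "A = (\<lambda>i j. \<Sum>k<n. c k * f k i j)"
    using A unfolding mspan_def by blast
  show "(\<lambda>i j. c0 * A i j) \<in> mspan S" unfolding mspan_def T using f
    by (intro CollectI exI[of _ n] exI[of _ "\<lambda>k. c0 * c k"] exI[of _ f])
      (simp add: sum_distrib_left mult.assoc)
qed

lemma msub_add: "msubspace W \<Longrightarrow> A \<in> W \<Longrightarrow> B \<in> W \<Longrightarrow> (\<lambda>i j. A i j + B i j) \<in> W"
  unfolding msubspace_def by blast
lemma msub_scal: "msubspace W \<Longrightarrow> A \<in> W \<Longrightarrow> (\<lambda>i j. c * A i j) \<in> W"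
  unfolding msubspace_def by blast
lemma msub_zero: "msubspace W \<Longrightarrow> (\<lambda>i j. 0) \<in> W"
  unfolding msubspace_def by blast

lemma mspan_least: "msubspace W \<Longrightarrow> S \<subseteq> W \<Longrightarrow> mspan S \<subseteq> W"
  by (auto elim!: mspan_induct[where P = "\<lambda>T. T \<in> W"] intro: msub_add msub_scal msub_zero)

lemma msub_sum:
  assumes "msubspace W" "finite I" "\<forall>i\<in>I. F i \<in> W"
  shows "(\<lambda>p q. \<Sum>i\<in>I. F i p q) \<in> W"
  using assms(2,3)
proof (induction I rule: finite_induct)
  case empty then show ?case using msub_zero[OF assms(1)] by simp
next
  case (insert x F) then show ?case using msub_add[OF assms(1)] by simp
qed



lemma sum_delta_UNIV: "(\<Sum>k\<in>(UNIV::'a::finite set). if k = i then c else 0) = c"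
  by (simp add: sum.delta')

lemma comm_diag:
  assumes "A \<in> commutant (linfty :: ('a::finite) mat set)"
  shows "A \<in> linfty"
  unfolding linfty_def
proof (intro CollectI allI impI)
  fix k i :: 'a assume ne: "k \<noteq> i"
  have d: "munit i i \<in> (linfty :: 'a mat set)" unfolding linfty_def munit_def by auto
  have "mmul A (munit i i) k i = mmul (munit i i) A k i"
    using assms d unfolding commutant_def by auto
  moreover have "mmul A (munit i i) k i = A k i"
    unfolding mmul_def munit_def
    by (simp add: if_distrib[of "\<lambda>x. A k _ * x"] cong: if_cong)
  moreover have "mmul (munit i i) A k i = 0"
    unfolding mmul_def munit_def using ne by simp
  ultimately show "A k i = 0" by simp
qed

lemma munit_linfty: "munit x x \<in> linfty"
  unfolding linfty_def munit_def by auto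

lemma munit_comm: "munit x x \<in> commutant (linfty :: ('a::finite) mat set)"
  unfolding commutant_def
proof (intro CollectI ballI)
  fix B :: "'a mat" assume B: "B \<in> linfty"
  show "mmul (munit x x) B = mmul B (munit x x)"
  proof (intro ext)
    fix i j
    have l: "mmul (munit x x) B i j = (if i = x then B x j else 0)"
      unfolding mmul_def munit_def by (simp add: if_distrib[of "\<lambda>z. z * B _ j"] sum.delta' cong: if_cong)
    have r: "mmul B (munit x x) i j = (if j = x then B i x else 0)"
      unfolding mmul_def munit_def by (simp add: if_distrib[of "\<lambda>z. B i _ * z"] sum.delta' cong: if_cong)
    show "mmul (munit x x) B i j = mmul B (munit x x) i j"
      unfolding l r using B unfolding linfty_def by auto
  qed
qed

lemma center_linfty: "Z \<in> center (linfty :: ('a::finite) mat set) \<Longrightarrow> Z \<in> linfty"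
  unfolding center_def by auto

lemma munit_center: "munit x x \<in> center (linfty :: ('a::finite) mat set)"
  unfolding center_def using munit_linfty munit_comm by auto

lemma mmul_left_diag:
  fixes A :: "('x::finite) mat" and T :: "('x \<times> 'y::finite) mat"
  assumes "A \<in> linfty"
  shows "mmul (tens A idm) T = (\<lambda>i j. A (fst i) (fst i) * T i j)"
proof (intro ext)
  fix i j
  have "\<And>k. tens A idm i k * T k j = (if k = i then A (fst i) (fst i) * T i j else 0)"
    using assms unfolding tens_def idm_def linfty_def by (auto split: prod.splits)
  then show "mmul (tens A idm) T i j = A (fst i) (fst i) * T i j"
    unfolding mmul_def by (simp add: sum.delta')
qed

lemma mmul_right_diag:
  fixes B :: "('x::finite) mat" and T :: "('x \<times> 'y::finite) mat"
  assumes "B \<in> linfty"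
  shows "mmul T (tens B idm) = (\<lambda>i j. T i j * B (fst j) (fst j))"
proof (intro ext)
  fix i j
  have "\<And>k. T i k * tens B idm k j = (if k = j then T i j * B (fst j) (fst j) else 0)"
    using assms unfolding tens_def idm_def linfty_def by (auto split: prod.splits)
  then show "mmul T (tens B idm) i j = T i j * B (fst j) (fst j)"
    unfolding mmul_def by (simp add: sum.delta')
qed

lemma mmul_center:
  fixes Z :: "('y::finite) mat" and T :: "('x::finite \<times> 'y) mat"
  assumes "Z \<in> linfty"
  shows "mmul (tens idm Z) T = (\<lambda>i j. Z (snd i) (snd i) * T i j)"
proof (intro ext)
  fix i j
  have "\<And>k. tens idm Z i k * T k j = (if k = i then Z (snd i) (snd i) * T i j else 0)"
    using assms unfolding tens_def idm_def linfty_def by (auto split: prod.splits)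
  then show "mmul (tens idm Z) T i j = Z (snd i) (snd i) * T i j"
    unfolding mmul_def by (simp add: sum.delta')
qed



lemma gen_in: "(x1, x2, y) \<in> R \<Longrightarrow> tens (munit x1 x2) (munit y y) \<in> V_of_R R"
  unfolding V_of_R_def by (rule mspan_sub) blast

lemma mult_closed:
  fixes R :: "('x::finite \<times> 'x \<times> 'y::finite) set"
  assumes "T \<in> V_of_R R"
  shows "(\<lambda>i j. g i j * T i j) \<in> V_of_R R"
proof -
  have h: "T \<in> mspan {tens (munit x1 x2) (munit y y) |x1 x2 y. (x1, x2, y) \<in> R}"
    using assms unfolding V_of_R_def .
  show ?thesis
proof (rule mspan_induct[OF h, where P = "\<lambda>T. (\<lambda>i j. g i j * T i j) \<in> V_of_R R"])
  show "(\<lambda>i j. g i j * 0) \<in> V_of_R R"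
    using msub_zero[OF mspan_subspace] unfolding V_of_R_def by simp
next
  fix A B assume "(\<lambda>i j. g i j * A i j) \<in> V_of_R R" "(\<lambda>i j. g i j * B i j) \<in> V_of_R R"
  then have "(\<lambda>i j. g i j * A i j + g i j * B i j) \<in> V_of_R R"
    using msub_add[OF mspan_subspace] unfolding V_of_R_def by blast
  then show "(\<lambda>i j. g i j * (A i j + B i j)) \<in> V_of_R R" by (simp add: distrib_left)
next
  fix c A assume "(\<lambda>i j. g i j * A i j) \<in> V_of_R R"
  then have "(\<lambda>i j. c * (g i j * A i j)) \<in> V_of_R R"
    using msub_scal[OF mspan_subspace] unfolding V_of_R_def by blast
  then show "(\<lambda>i j. g i j * (c * A i j)) \<in> V_of_R R" by (simp add: mult_ac)
next
  fix A assume "A \<in> {tens (munit x1 x2) (munit y y) |x1 x2 y. (x1, x2, y) \<in> R}"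
  then obtain x1 x2 y where A: "A = tens (munit x1 x2) (munit y y)" and R: "(x1, x2, y) \<in> R"
    by blast
  have e: "(\<lambda>i j. g i j * A i j) = (\<lambda>i j. g (x1, y) (x2, y) * A i j)"
    unfolding A tens_def munit_def by (auto intro!: ext split: prod.splits)
  show "(\<lambda>i j. g i j * A i j) \<in> V_of_R R" unfolding e
    using msub_scal[OF mspan_subspace] gen_in[OF R] A unfolding V_of_R_def by blast
qed
qed

lemma entry_zero:
  assumes "T \<in> V_of_R R" "(x1, x2, y) \<notin> R"
  shows "T (x1, y) (x2, y) = 0"
proof -
  have "\<forall>x1 x2 y. (x1, x2, y) \<notin> R \<longrightarrow> T (x1, y) (x2, y) = 0"
    using assms(1) unfolding V_of_R_def
    by (rule mspan_induct) (auto simp: tens_def munit_def)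
  then show ?thesis using assms(2) by blast
qed

lemma tensor_zero:
  assumes "T \<in> tensor_sp UNIV (linfty :: ('y::finite) mat set)" "b \<noteq> d"
  shows "T (a, b) (c, d) = 0"
proof -
  have "\<forall>a b c d. b \<noteq> d \<longrightarrow> T (a, b) (c, d) = 0"
    using assms(1) unfolding tensor_sp_def
    by (rule mspan_induct) (auto simp: tens_def linfty_def)
  then show ?thesis using assms(2) by blast
qed

lemma qmr_V_of_R:
  fixes R :: "('x::finite \<times> 'x \<times> 'y::finite) set"
  shows "quantum_multi_relation (linfty :: 'x mat set) (linfty :: 'y mat set) (V_of_R R)"
  unfolding quantum_multi_relation_def
proof (intro conjI ballI)
  show "msubspace (V_of_R R)" unfolding V_of_R_def by (rule mspan_subspace)
  show "V_of_R R \<subseteq> tensor_sp UNIV linfty"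
    unfolding V_of_R_def tensor_sp_def
  proof (rule mspan_least[OF mspan_subspace])
    show "{tens (munit x1 x2) (munit y y) |x1 x2 y. (x1, x2, y) \<in> R}
        \<subseteq> mspan {tens A B |A B. A \<in> UNIV \<and> B \<in> linfty}"
      using munit_linfty by (blast intro: mspan_sub)
  qed
next
  fix A B T assume A: "A \<in> commutant (linfty :: 'x mat set)"
    and B: "B \<in> commutant (linfty :: 'x mat set)" and T: "T \<in> V_of_R R"
  have "(\<lambda>i j. (A (fst i) (fst i) * B (fst j) (fst j)) * T i j) \<in> V_of_R R"
    by (rule mult_closed[OF T])
  then show "mmul (tens A idm) (mmul T (tens B idm)) \<in> V_of_R R"
    unfolding mmul_left_diag[OF comm_diag[OF A]] mmul_right_diag[OF comm_diag[OF B]]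
    by (simp add: mult_ac)
next
  fix Z T assume Z: "Z \<in> center (linfty :: 'y mat set)" and T: "T \<in> V_of_R R"
  show "mmul (tens idm Z) T \<in> V_of_R R"
    unfolding mmul_center[OF center_linfty[OF Z]] by (rule mult_closed[OF T])
qed

lemma R_V_R: "R_of_V (V_of_R R) = (R :: ('x::finite \<times> 'x \<times> 'y::finite) set)"
proof (intro set_eqI iffI)
  fix t assume "t \<in> R_of_V (V_of_R R)"
  then obtain x1 x2 y T where t: "t = (x1, x2, y)" and T: "T \<in> V_of_R R"
    and ne: "T (x1, y) (x2, y) \<noteq> 0"
    unfolding R_of_V_def by blast
  have "(x1, x2, y) \<in> R"
  proof (rule ccontr)
    assume "(x1, x2, y) \<notin> R"
    then have "T (x1, y) (x2, y) = 0" by (rule entry_zero[OF T])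
    then show False using ne by simp
  qed
  then show "t \<in> R" unfolding t .
next
  fix t assume tR: "t \<in> R"
  obtain x1 x2 y where t: "t = (x1, x2, y)" by (cases t) auto
  have g: "tens (munit x1 x2) (munit y y) \<in> V_of_R R" using tR unfolding t by (rule gen_in)
  have o: "tens (munit x1 x2) (munit y y) (x1, y) (x2, y) \<noteq> 0" by (simp add: tens_def munit_def)
  have "\<exists>T\<in>V_of_R R. T (x1, y) (x2, y) \<noteq> 0" using g o by blast
  then show "t \<in> R_of_V (V_of_R R)" unfolding R_of_V_def t by simp
qed

lemma V_R_V:
  fixes V :: "('x::finite \<times> 'y::finite) mat set"
  assumes Q: "quantum_multi_relation (linfty :: 'x mat set) (linfty :: 'y mat set) V"
  shows "V_of_R (R_of_V V) = V"
proof -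
  have sub: "msubspace V" and ten: "V \<subseteq> tensor_sp UNIV (linfty :: 'y mat set)"
    and bim: "\<And>A B T. A \<in> commutant (linfty :: 'x mat set) \<Longrightarrow> B \<in> commutant (linfty :: 'x mat set)
       \<Longrightarrow> T \<in> V \<Longrightarrow> mmul (tens A idm) (mmul T (tens B idm)) \<in> V"
    and cen: "\<And>Z T. Z \<in> center (linfty :: 'y mat set) \<Longrightarrow> T \<in> V \<Longrightarrow> mmul (tens idm Z) T \<in> V"
    using Q unfolding quantum_multi_relation_def by blast+
  have genV: "tens (munit x1 x2) (munit y y) \<in> V" if hR: "(x1, x2, y) \<in> R_of_V V" for x1 x2 y
  proof -
    obtain T where T: "T \<in> V" and ne: "T (x1, y) (x2, y) \<noteq> 0"
      using hR unfolding R_of_V_def by blast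
    define t where "t = T (x1, y) (x2, y)"
    have T1: "mmul (tens (munit x1 x1) idm) (mmul T (tens (munit x2 x2) idm)) \<in> V"
      by (rule bim[OF munit_comm munit_comm T])
    have T2: "mmul (tens idm (munit y y)) (mmul (tens (munit x1 x1) idm) (mmul T (tens (munit x2 x2) idm))) \<in> V"
      by (rule cen[OF munit_center T1])
    have T3: "(\<lambda>i j. inverse t * mmul (tens idm (munit y y)) (mmul (tens (munit x1 x1) idm) (mmul T (tens (munit x2 x2) idm))) i j) \<in> V"
      by (rule msub_scal[OF sub T2])
    have Tz: "\<And>a b c d. b \<noteq> d \<Longrightarrow> T (a, b) (c, d) = 0"
    proof -
      have "T \<in> tensor_sp UNIV (linfty :: 'y mat set)" using ten T by (rule subsetD)
      then show "\<And>a b c d. b \<noteq> d \<Longrightarrow> T (a, b) (c, d) = 0" by (rule tensor_zero)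
    qed
    have "(\<lambda>i j. inverse t * mmul (tens idm (munit y y)) (mmul (tens (munit x1 x1) idm) (mmul T (tens (munit x2 x2) idm))) i j)
       = tens (munit x1 x2) (munit y y)"
      unfolding mmul_center[OF munit_linfty] mmul_left_diag[OF munit_linfty] mmul_right_diag[OF munit_linfty]
    proof (intro ext)
      fix i j :: "'x \<times> 'y"
      obtain a b where i: "i = (a, b)" by (cases i) auto
      obtain c d where j: "j = (c, d)" by (cases j) auto
      show "inverse t * (munit y y (snd i) (snd i) * (munit x1 x1 (fst i) (fst i) * (T i j * munit x2 x2 (fst j) (fst j))))
           = tens (munit x1 x2) (munit y y) i j"
      proof (cases "a = x1 \<and> c = x2 \<and> b = y \<and> d = y")
        case True
        then show ?thesis unfolding i j t_def using ne by (simp add: tens_def munit_def)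
      next
        case False
        then have "a \<noteq> x1 \<or> c \<noteq> x2 \<or> b \<noteq> y \<or> (b = y \<and> d \<noteq> y)" by blast
        then show ?thesis unfolding i j using Tz[of b d a c] by (auto simp: tens_def munit_def)
      qed
    qed
    then show ?thesis using T3 by simp
  qed
  show ?thesis
  proof
    show "V_of_R (R_of_V V) \<subseteq> V" unfolding V_of_R_def
      by (rule mspan_least[OF sub]) (auto intro: genV)
  next
    show "V \<subseteq> V_of_R (R_of_V V)"
    proof
      fix T assume T: "T \<in> V"
      have Tz: "\<And>a b c d. b \<noteq> d \<Longrightarrow> T (a, b) (c, d) = 0"
    proof -
      have "T \<in> tensor_sp UNIV (linfty :: 'y mat set)" using ten T by (rule subsetD)
      then show "\<And>a b c d. b \<noteq> d \<Longrightarrow> T (a, b) (c, d) = 0" by (rule tensor_zero)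
    qed
      define F where "F = (\<lambda>(t :: 'x \<times> 'x \<times> 'y). case t of (a, c, b) \<Rightarrow>
         (\<lambda>p q. T (a, b) (c, b) * tens (munit a c) (munit b b) p q))"
      have Fin: "\<forall>t\<in>UNIV. F t \<in> V_of_R (R_of_V V)"
      proof
        fix t :: "'x \<times> 'x \<times> 'y"
        obtain a c b where t: "t = (a, c, b)" by (cases t) auto
        show "F t \<in> V_of_R (R_of_V V)"
        proof (cases "T (a, b) (c, b) = 0")
          case True
          then have "F t = (\<lambda>p q. 0)" unfolding F_def t by simp
          then show ?thesis using msub_zero[OF qmr_V_of_R[THEN quantum_multi_relation_def[THEN iffD1], THEN conjunct1]] by simp
        next
          case False
          then have "(a, c, b) \<in> R_of_V V" unfolding R_of_V_def using T by blast
          then show ?thesis unfolding F_def t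
            using msub_scal[OF qmr_V_of_R[THEN quantum_multi_relation_def[THEN iffD1], THEN conjunct1] gen_in]
            by simp
        qed
      qed
      have "(\<lambda>p q. \<Sum>t\<in>UNIV. F t p q) \<in> V_of_R (R_of_V V)"
        by (rule msub_sum[OF qmr_V_of_R[THEN quantum_multi_relation_def[THEN iffD1], THEN conjunct1] finite Fin])
      moreover have "(\<lambda>p q. \<Sum>t\<in>UNIV. F t p q) = T"
      proof (intro ext)
        fix p q :: "'x \<times> 'y"
        obtain p1 p2 where p: "p = (p1, p2)" by (cases p) auto
        obtain q1 q2 where q: "q = (q1, q2)" by (cases q) auto
        have "\<And>t. F t p q = (if t = (p1, q1, p2) then T p q else 0)"
        proof -
          fix t :: "'x \<times> 'x \<times> 'y"
          obtain a c b where t: "t = (a, c, b)" by (cases t) auto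
          show "F t p q = (if t = (p1, q1, p2) then T p q else 0)"
          proof (cases "a = p1 \<and> c = q1 \<and> b = p2 \<and> b = q2")
            case True then show ?thesis unfolding F_def t p q using True by (auto simp: tens_def munit_def)
          next
            case False
            then have "a \<noteq> p1 \<or> c \<noteq> q1 \<or> b \<noteq> p2 \<or> (b = p2 \<and> p2 \<noteq> q2)" by blast
            then show ?thesis unfolding F_def t p q using Tz[of p2 q2 p1 q1]
              by (auto simp: tens_def munit_def)
          qed
        qed
        then show "(\<Sum>t\<in>UNIV. F t p q) = T p q" by (simp add: sum.delta')
      qed
      ultimately show "T \<in> V_of_R (R_of_V V)" by simp
    qed
  qed
qed


theorem proposition4p2:
  fixes dummyX :: "'x::finite itself" and dummyY :: "'y::finite itself"
  shows "(\<forall>R :: ('x \<times> 'x \<times> 'y) set.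
            quantum_multi_relation (linfty :: 'x mat set) (linfty :: 'y mat set) (V_of_R R))
       \<and> bij_betw (V_of_R :: ('x \<times> 'x \<times> 'y) set \<Rightarrow> _) UNIV
           {V. quantum_multi_relation (linfty :: 'x mat set) (linfty :: 'y mat set) V}
       \<and> (\<forall>R :: ('x \<times> 'x \<times> 'y) set. R_of_V (V_of_R R) = R)
       \<and> (\<forall>V. quantum_multi_relation (linfty :: 'x mat set) (linfty :: 'y mat set) V
              \<longrightarrow> V_of_R (R_of_V V) = V)"
proof -
  have A: "\<forall>R :: ('x \<times> 'x \<times> 'y) set.
            quantum_multi_relation (linfty :: 'x mat set) (linfty :: 'y mat set) (V_of_R R)"
    using qmr_V_of_R by blast
  have C: "\<forall>R :: ('x \<times> 'x \<times> 'y) set. R_of_V (V_of_R R) = R"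
    using R_V_R by blast
  have D: "\<forall>V. quantum_multi_relation (linfty :: 'x mat set) (linfty :: 'y mat set) V
              \<longrightarrow> V_of_R (R_of_V V) = V"
    using V_R_V by blast
  have B: "bij_betw (V_of_R :: ('x \<times> 'x \<times> 'y) set \<Rightarrow> _) UNIV
           {V. quantum_multi_relation (linfty :: 'x mat set) (linfty :: 'y mat set) V}"
  proof (rule bij_betw_byWitness[where f' = R_of_V])
    show "\<forall>a\<in>UNIV. R_of_V (V_of_R a) = (a :: ('x \<times> 'x \<times> 'y) set)" using C by blast
    show "\<forall>a'\<in>{V. quantum_multi_relation (linfty :: 'x mat set) (linfty :: 'y mat set) V}.
       V_of_R (R_of_V a') = a'" using D by blast
    show "V_of_R ` UNIV \<subseteq> {V. quantum_multi_relation (linfty :: 'x mat set) (linfty :: 'y mat set) V}"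
      using A by blast
    show "R_of_V ` {V. quantum_multi_relation (linfty :: 'x mat set) (linfty :: 'y mat set) V}
        \<subseteq> (UNIV :: ('x \<times> 'x \<times> 'y) set set)" by blast
  qed
  show ?thesis using A B C D by blast
qed

end
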